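(* Let $n\geq1$ be an integer, $p>1$, $q=pe^{2\pi i/n}$, and let $A=\{a_1,\dots,a_m\}\subset\mathbb R$ with $a_1<a_2<\cdots<a_m$. Let $X_{n,p}=\{\sum_{k=0}^{n-1}x_kq^k\mid x_k\in\{0,1\}\}$ and $P_{n,p}=\mathrm{conv}(X_{n,p})$. If $$\max_{i=1,\dots,m-1}(a_{i+1}-a_i)\leq\frac{\max A-\min A}{p^n-1},$$ then every $$x\in\frac{\max A-\min A}{p^n-1}\,P_{n,p}+\frac{1}{p^n-1}\sum_{k=0}^{n-1}(\min A)\,q^k$$ has a representation in base $q$ with alphabet $A$, i.e. there is a sequence $(x_j)_{j\geq1}$ with $x_j\in A$ and $x=\sum_{j=1}^\infty x_jq^{-j}$.
   Context: $\mathrm{conv}$ denotes convex hull in $\mathbb C\cong\mathbb R^2$; for $Y\subset\mathbb C$, $c\in\mathbb R$, $d\in\mathbb C$: $cY+d=\{cy+d\mid y\in Y\}$. *)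

theory Defs
  imports "HOL-Analysis.Analysis"
begin

definition qbase :: "nat \<Rightarrow> real \<Rightarrow> complex" where
  "qbase n p = complex_of_real p * exp (2 * of_real pi * \<i> / of_nat n)"

definition Xset :: "nat \<Rightarrow> real \<Rightarrow> complex set" where
  "Xset n p = {(\<Sum>k<n. complex_of_real (x k) * (qbase n p) ^ k) | x. \<forall>k<n. x k \<in> {0, 1}}"

definition Pset :: "nat \<Rightarrow> real \<Rightarrow> complex set" where
  "Pset n p = convex hull (Xset n p)"

definition has_rep :: "complex \<Rightarrow> real set \<Rightarrow> complex \<Rightarrow> bool" where
  "has_rep q A x \<longleftrightarrow> (\<exists>d :: nat \<Rightarrow> real. (\<forall>j\<ge>1. d j \<in> A) \<and>
      (\<lambda>j. complex_of_real (d (Suc j)) * inverse q ^ (Suc j)) sums x)"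

end

theory Submission
  imports Defs
begin

lemma digit_lemma:
  fixes a :: "nat \<Rightarrow> real" and A :: "real set"
  assumes "m \<ge> 1" "strict_mono_on {1..m} a" "A = a ` {1..m}"
    and gap: "\<forall>i\<in>{1..<m}. a (i + 1) - a i \<le> h"
    and "\<alpha> \<le> Max A" "Min A \<le> \<alpha> + h"
  shows "\<exists>g\<in>A. \<alpha> \<le> g \<and> g \<le> \<alpha> + h"
proof -
  have fin: "finite A" "A \<noteq> {}" using assms by auto
  define G where "G = {g\<in>A. \<alpha> \<le> g}"
  have "Max A \<in> A" by (rule Max_in[OF fin])
  hence "Max A \<in> G" unfolding G_def using assms(5) by blast
  hence Gne: "G \<noteq> {}" by blast
  have Gfin: "finite G" using fin unfolding G_def by auto
  define g0 where "g0 = Min G"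
  have g0G: "g0 \<in> G" using Gne Gfin g0_def by auto
  have g0min: "\<And>g. g \<in> G \<Longrightarrow> g0 \<le> g" using Gfin g0_def by auto
  from g0G have "g0 \<in> A" unfolding G_def by auto
  then obtain j where j: "j \<in> {1..m}" "g0 = a j" using assms(3) by auto
  have "g0 \<le> \<alpha> + h"
  proof (cases "j = 1")
    case True
    have "Min A \<in> A" using fin by auto
    then obtain i where i: "i \<in> {1..m}" "Min A = a i" using assms(3) by auto
    have "a 1 \<le> a i"
    proof (cases "i = 1")
      case False
      hence "a 1 < a i" using assms(2) i(1) \<open>m \<ge> 1\<close>
        by (auto simp: strict_mono_on_def)
      thus ?thesis by simp
    qed simp
    thus ?thesis using True j i assms(6) by simp
  next
    case False
    hence jm: "j - 1 \<in> {1..<m}" using j by auto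
    have lt: "a (j - 1) < a j"
      by (rule strict_mono_onD[OF assms(2)]) (use j False in auto)
    have "a (j - 1) \<in> A" using assms(3) jm by auto
    have "a (j-1) < \<alpha>"
    proof (rule ccontr)
      assume "\<not> a (j-1) < \<alpha>"
      hence "a (j-1) \<in> G" using \<open>a (j - 1) \<in> A\<close> unfolding G_def by auto
      thus False using g0min lt j by fastforce
    qed
    moreover have "a (j - 1 + 1) - a (j - 1) \<le> h" using gap jm by blast
    moreover have "j - 1 + 1 = j" using False j by auto
    ultimately show ?thesis using j by auto
  qed
  thus ?thesis using g0G \<open>g0 \<in> A\<close> unfolding G_def by auto
qed

lemma shift_identity:
  fixes q :: complex and v :: "nat \<Rightarrow> real"
  assumes "q ^ n = of_real (s + 1)" "n \<ge> 1" "s \<noteq> 0"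
  shows "q * ((\<Sum>k<n. of_real (v k) * q ^ k) / of_real s) - of_real d
       = (\<Sum>k<n. of_real (if k = 0 then (s + 1) * v (n - 1) - s * d else v (k - 1)) * q ^ k) / of_real s"
proof -
  obtain n' where n: "n = Suc n'" using assms(2) by (cases n) auto
  have L: "q * (\<Sum>k<n. of_real (v k) * q ^ k) = (\<Sum>k<n'. of_real (v k) * q ^ Suc k) + of_real (v n') * q ^ n"
    by (simp add: n sum_distrib_left distrib_left mult_ac)
  have R: "(\<Sum>k<n. of_real (if k = 0 then (s + 1) * v (n - 1) - s * d else v (k - 1)) * q ^ k)
      = of_real ((s + 1) * v n' - s * d) + (\<Sum>k<n'. of_real (v k) * q ^ Suc k)"
    by (simp add: n sum.lessThan_Suc_shift del: sum.lessThan_Suc)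
  define T where "T = (\<Sum>k<n'. of_real (v k) * q ^ Suc k)"
  have "q * ((\<Sum>k<n. of_real (v k) * q ^ k) / of_real s) - of_real d
      = (q * (\<Sum>k<n. of_real (v k) * q ^ k) - of_real s * of_real d) / of_real s"
    using assms(3) by (simp add: field_simps)
  also have "\<dots> = (T + of_real (v n') * of_real (s + 1) - of_real s * of_real d) / of_real s"
    unfolding L assms(1) T_def ..
  also have "\<dots> = (of_real ((s + 1) * v n' - s * d) + T) / of_real s"
    by (simp add: algebra_simps)
  finally show ?thesis unfolding R T_def .
qed

theorem corollary4p7:
  fixes n m :: nat and p :: real and a :: "nat \<Rightarrow> real" and A :: "real set"
  assumes "n \<ge> 1" and "p > 1" and "m \<ge> 1"
    and "strict_mono_on {1..m} a"
    and "A = a ` {1..m}"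
    and "\<forall>i\<in>{1..<m}. a (i + 1) - a i \<le> (Max A - Min A) / (p ^ n - 1)"
    and "x \<in> (\<lambda>y. complex_of_real ((Max A - Min A) / (p ^ n - 1)) * y
              + complex_of_real (1 / (p ^ n - 1)) * (\<Sum>k<n. complex_of_real (Min A) * (qbase n p) ^ k))
            ` Pset n p"
  shows "has_rep (qbase n p) A x"
proof -
  define q where "q = qbase n p"
  define s where "s = p ^ n - 1"
  define m0 where "m0 = Min A"
  define M0 where "M0 = Max A"
  define L where "L = M0 - m0"
  have finA: "finite A" "A \<noteq> {}" using assms by auto
  have m0A: "m0 \<in> A" and M0A: "M0 \<in> A" using finA m0_def M0_def by auto
  have "m0 \<le> M0" using finA m0_def M0_def by (simp add: Min_le_iff Max_ge_iff)
  hence L0: "L \<ge> 0" by (simp add: L_def)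
  have pn: "p ^ n > 1" using assms(1,2) by (simp add: one_less_power)
  hence s0: "s > 0" by (simp add: s_def)
  have qn: "q ^ n = of_real (s + 1)"
  proof -
    have "exp (2 * of_real pi * \<i> / of_nat n) ^ n = exp (of_nat n * (2 * of_real pi * \<i> / of_nat n))"
      by (simp only: exp_of_nat_mult)
    also have "of_nat n * (2 * of_real pi * \<i> / of_nat n) = 2 * of_real pi * \<i>" using assms(1) by simp
    also have "exp (2 * of_real pi * \<i>) = 1" by (rule exp_two_pi_i)
    finally show ?thesis by (simp add: q_def qbase_def s_def power_mult_distrib)
  qed
  have nq: "norm q = p" using assms(2) by (simp add: q_def qbase_def norm_mult)
  define S where "S = (\<lambda>v::nat\<Rightarrow>real. (\<Sum>k<n. of_real (v k) * q ^ k) / complex_of_real s)"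
  define Inv where "Inv = {v::nat\<Rightarrow>real. \<forall>k<n. m0 \<le> v k \<and> v k \<le> M0}"
  have step: "\<exists>d v'. d \<in> A \<and> v' \<in> Inv \<and> q * S v - of_real d = S v'" if v: "v \<in> Inv" for v
  proof -
    define \<alpha> where "\<alpha> = (p ^ n * v (n - 1) - M0) / s"
    have vn: "m0 \<le> v (n - 1)" "v (n - 1) \<le> M0" using v assms(1) by (auto simp: Inv_def)
    have ps: "p ^ n = s + 1" by (simp add: s_def)
    have "\<alpha> \<le> Max A"
    proof -
      have "p ^ n * v (n - 1) \<le> p ^ n * M0" using vn pn by simp
      thus ?thesis using s0 by (simp add: \<alpha>_def M0_def[symmetric] divide_le_eq ps algebra_simps)
    qed
    moreover have "Min A \<le> \<alpha> + L / s"
    proof -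
      have "p ^ n * m0 \<le> p ^ n * v (n - 1)" using vn pn by simp
      hence "m0 * s \<le> p ^ n * v (n - 1) - M0 + L" by (simp add: ps L_def algebra_simps)
      thus ?thesis using s0 by (simp add: \<alpha>_def m0_def[symmetric] add_divide_distrib[symmetric] le_divide_eq)
    qed
    ultimately obtain g where g: "g \<in> A" "\<alpha> \<le> g" "g \<le> \<alpha> + L / s"
      using digit_lemma[OF assms(3,4,5), of "L / s" \<alpha>] assms(6) by (auto simp: L_def M0_def m0_def s_def)
    define v' where "v' = (\<lambda>k. if k = 0 then (s + 1) * v (n - 1) - s * g else v (k - 1))"
    have "s * \<alpha> \<le> s * g" "s * g \<le> s * (\<alpha> + L / s)" using g s0 by auto
    hence "p ^ n * v (n - 1) - M0 \<le> s * g" "s * g \<le> p ^ n * v (n - 1) - M0 + L"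
      using s0 by (auto simp: \<alpha>_def distrib_left)
    hence "v' \<in> Inv" using v unfolding Inv_def v'_def by (auto simp: ps L_def)
    moreover have "q * S v - of_real g = S v'"
      unfolding S_def v'_def by (rule shift_identity[OF qn assms(1)]) (use s0 in auto)
    ultimately show ?thesis using g by blast
  qed
  obtain dd nv where dnv: "\<And>v. v \<in> Inv \<Longrightarrow> dd v \<in> A \<and> nv v \<in> Inv \<and> q * S v - of_real (dd v) = S (nv v)"
    using step by metis
  define C where "C = {(\<Sum>k<n. complex_of_real (t k) * q ^ k) | t. \<forall>k<n. 0 \<le> t k \<and> t k \<le> 1}"
  have "convex C"
    unfolding convex_def
  proof (intro ballI allI impI)
    fix x y :: complex and u w :: real
    assume "x \<in> C" "y \<in> C" "0 \<le> u" "0 \<le> w" "u + w = 1"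
    then obtain t1 t2 where t: "x = (\<Sum>k<n. complex_of_real (t1 k) * q ^ k)" "\<forall>k<n. 0 \<le> t1 k \<and> t1 k \<le> 1"
      "y = (\<Sum>k<n. complex_of_real (t2 k) * q ^ k)" "\<forall>k<n. 0 \<le> t2 k \<and> t2 k \<le> 1"
      unfolding C_def by blast
    have e1: "u *\<^sub>R x + w *\<^sub>R y = (\<Sum>k<n. complex_of_real (u * t1 k + w * t2 k) * q ^ k)"
      by (simp add: t scaleR_conv_of_real sum_distrib_left sum.distrib[symmetric] algebra_simps)
    moreover have e2: "\<forall>k<n. 0 \<le> u * t1 k + w * t2 k \<and> u * t1 k + w * t2 k \<le> 1"
    proof (intro allI impI conjI)
      fix k assume "k < n"
      hence "0 \<le> t1 k" "t1 k \<le> 1" "0 \<le> t2 k" "t2 k \<le> 1" using t by auto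
      thus "0 \<le> u * t1 k + w * t2 k" using \<open>0 \<le> u\<close> \<open>0 \<le> w\<close> by simp
      have "u * t1 k \<le> u" "w * t2 k \<le> w"
        using \<open>t1 k \<le> 1\<close> \<open>t2 k \<le> 1\<close> \<open>0 \<le> u\<close> \<open>0 \<le> w\<close> by (auto simp: mult_left_le)
      thus "u * t1 k + w * t2 k \<le> 1" using \<open>u + w = 1\<close> by simp
    qed
    show "u *\<^sub>R x + w *\<^sub>R y \<in> C" unfolding C_def
      by (rule CollectI, rule exI[of _ "\<lambda>k. u * t1 k + w * t2 k"]) (use e1 e2 in simp)
  qed
  moreover have "Xset n p \<subseteq> C"
    unfolding Xset_def C_def q_def by force
  ultimately have "Pset n p \<subseteq> C" unfolding Pset_def by (simp add: hull_minimal)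
  then obtain t where t: "\<forall>k<n. 0 \<le> t k \<and> t k \<le> 1"
    and x: "x = complex_of_real (L / s) * (\<Sum>k<n. complex_of_real (t k) * q ^ k)
              + complex_of_real (1 / s) * (\<Sum>k<n. complex_of_real m0 * q ^ k)"
    using assms(7) unfolding C_def L_def M0_def m0_def s_def q_def by blast
  define v0 where "v0 = (\<lambda>k. m0 + L * t k)"
  have v0I: "v0 \<in> Inv"
  proof -
    have "m0 \<le> v0 k \<and> v0 k \<le> M0" if "k < n" for k
    proof -
      have "L * t k \<le> L" "0 \<le> L * t k" using t that L0 by (auto simp: mult_left_le)
      thus ?thesis unfolding v0_def L_def by linarith
    qed
    thus ?thesis unfolding Inv_def by blast
  qed
  have xS: "x = S v0"
    unfolding x S_def v0_def using s0
    by (simp add: sum_divide_distrib sum_distrib_left sum.distrib[symmetric] field_simps)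
  define V where "V = (\<lambda>j. (nv ^^ j) v0)"
  have VI: "V j \<in> Inv" for j by (induction j) (auto simp: V_def v0I dnv)
  define d where "d = (\<lambda>j. dd (V (j - 1)))"
  have q0: "q \<noteq> 0" using nq assms(2) by auto
  have part: "x = (\<Sum>j<N. complex_of_real (d (Suc j)) * inverse q ^ Suc j) + inverse q ^ N * S (V N)" for N
  proof (induction N)
    case 0 then show ?case by (simp add: xS V_def)
  next
    case (Suc N)
    have e: "q * S (V N) - of_real (dd (V N)) = S (V (Suc N))" using dnv[OF VI[of N]] by (simp add: V_def)
    have "S (V N) = inverse q * (of_real (dd (V N)) + S (V (Suc N)))"
      using q0 e by (simp add: field_simps)
    then show ?case using Suc by (simp add: d_def algebra_simps)
  qed
  define B where "B = (\<Sum>k<n. (\<bar>m0\<bar> + \<bar>M0\<bar>) * p ^ k) / s"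
  have bnd: "norm (S v) \<le> B" if "v \<in> Inv" for v
  proof -
    have "norm (\<Sum>k<n. of_real (v k) * q ^ k) \<le> (\<Sum>k<n. norm (of_real (v k) * q ^ k))"
      by (rule norm_sum)
    also have "\<dots> \<le> (\<Sum>k<n. (\<bar>m0\<bar> + \<bar>M0\<bar>) * p ^ k)"
    proof (rule sum_mono)
      fix k assume "k \<in> {..<n}"
      hence "\<bar>v k\<bar> \<le> \<bar>m0\<bar> + \<bar>M0\<bar>" using that unfolding Inv_def by auto
      thus "norm (of_real (v k) * q ^ k) \<le> (\<bar>m0\<bar> + \<bar>M0\<bar>) * p ^ k"
        using assms(2) by (simp add: norm_mult norm_power nq mult_right_mono)
    qed
    finally show ?thesis using s0 by (simp add: S_def B_def norm_divide divide_right_mono)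
  qed
  have tl0: "(\<lambda>N. inverse q ^ N * S (V N)) \<longlonglongrightarrow> 0"
  proof (rule Lim_null_comparison)
    show "\<forall>\<^sub>F N in sequentially. norm (inverse q ^ N * S (V N)) \<le> B * (1 / p) ^ N"
    proof (rule always_eventually, rule allI)
      fix N
      have "norm (inverse q ^ N * S (V N)) = (1 / p) ^ N * norm (S (V N))"
        by (simp add: norm_mult norm_power norm_inverse nq power_one_over divide_inverse power_inverse)
      also have "\<dots> \<le> (1 / p) ^ N * B"
        by (rule mult_left_mono[OF bnd[OF VI]]) (use assms(2) in simp)
      finally show "norm (inverse q ^ N * S (V N)) \<le> B * (1 / p) ^ N" by (simp add: mult.commute)
    qed
    show "(\<lambda>N. B * (1 / p) ^ N) \<longlonglongrightarrow> 0"
      by (rule tendsto_mult_right_zero, rule LIMSEQ_power_zero) (use assms(2) in auto)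
  qed
  have "(\<lambda>N. \<Sum>j<N. complex_of_real (d (Suc j)) * inverse q ^ Suc j) \<longlonglongrightarrow> x - 0"
  proof -
    have "(\<lambda>N. x - inverse q ^ N * S (V N)) \<longlonglongrightarrow> x - 0" by (intro tendsto_intros tl0)
    moreover have "(\<lambda>N. x - inverse q ^ N * S (V N)) = (\<lambda>N. \<Sum>j<N. complex_of_real (d (Suc j)) * inverse q ^ Suc j)"
      using part by (metis add_diff_cancel_right')
    ultimately show ?thesis by simp
  qed
  hence "(\<lambda>j. complex_of_real (d (Suc j)) * inverse q ^ Suc j) sums x" by (simp add: sums_def)
  moreover have "\<forall>j\<ge>1. d j \<in> A" using dnv VI by (simp add: d_def)
  ultimately show ?thesis unfolding has_rep_def q_def by blast
qed

end
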